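(* For every real $p>3$ there exists $n_0=n_0(p)$ such that for all $n\geq n_0$, \[ \phi(2,p,n)>f\bigl(p,T_2(n)\bigr). \]
   Context: For a real number $p>0$ and a finite simple graph $G$, $f(p,G)=\sum_{u\in V(G)} d^p(u)$, where $d(u)$ is the degree of $u$. $\phi(2,p,n)$ is the maximum of $f(p,G)$ over all triangle-free graphs $G$ of order $n$. $T_2(n)$ is the complete bipartite graph on $n$ vertices with parts of sizes $\lceil n/2\rceil$ and $\lfloor n/2\rfloor$. *)

theory Defs
  imports Complex_Main
begin

text \<open>A finite simple graph of order n is represented (up to isomorphism) by vertex set
  {0..<n} and a symmetric irreflexive edge relation E supported on {0..<n}.\<close>

definition simple_graph_on :: "nat \<Rightarrow> (nat \<Rightarrow> nat \<Rightarrow> bool) \<Rightarrow> bool" where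
  "simple_graph_on n E \<longleftrightarrow> (\<forall>u v. E u v \<longrightarrow> u < n \<and> v < n \<and> u \<noteq> v \<and> E v u)"

definition triangle_free :: "(nat \<Rightarrow> nat \<Rightarrow> bool) \<Rightarrow> bool" where
  "triangle_free E \<longleftrightarrow> \<not> (\<exists>u v w. E u v \<and> E v w \<and> E w u)"

definition degree :: "nat \<Rightarrow> (nat \<Rightarrow> nat \<Rightarrow> bool) \<Rightarrow> nat \<Rightarrow> nat" where
  "degree n E u = card {v. v < n \<and> E u v}"

definition fdeg :: "real \<Rightarrow> nat \<Rightarrow> (nat \<Rightarrow> nat \<Rightarrow> bool) \<Rightarrow> real" where
  "fdeg p n E = (\<Sum>u<n. real (degree n E u) powr p)"

definition phi2 :: "real \<Rightarrow> nat \<Rightarrow> real" where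
  "phi2 p n = Max {fdeg p n E | E. simple_graph_on n E \<and> triangle_free E}"

definition T2 :: "nat \<Rightarrow> nat \<Rightarrow> nat \<Rightarrow> bool" where
  "T2 n u v \<longleftrightarrow> u < n \<and> v < n \<and> ((u < (n + 1) div 2) \<longleftrightarrow> \<not> (v < (n + 1) div 2))"

end

theory Submission
  imports Defs "HOL-Real_Asymp.Real_Asymp"
begin

definition Bip :: "nat \<Rightarrow> nat \<Rightarrow> nat \<Rightarrow> nat \<Rightarrow> bool" where
  "Bip s n u v \<longleftrightarrow> u < n \<and> v < n \<and> ((u < s) \<longleftrightarrow> \<not> (v < s))"

lemma T2_Bip: "T2 n = Bip ((n+1) div 2) n"
  by (auto simp: T2_def Bip_def fun_eq_iff)

lemma Bip_ok: "simple_graph_on n (Bip s n) \<and> triangle_free (Bip s n)"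
  unfolding simple_graph_on_def triangle_free_def Bip_def by auto

lemma fdeg_Bip:
  assumes "s \<le> n"
  shows "fdeg p n (Bip s n) = real s * real (n-s) powr p + real (n-s) * real s powr p"
proof -
  have d1: "degree n (Bip s n) u = n - s" if "u < s" for u
  proof -
    have "{v. v < n \<and> Bip s n u v} = {s..<n}" using that assms by (auto simp: Bip_def)
    thus ?thesis by (simp add: degree_def)
  qed
  have d2: "degree n (Bip s n) u = s" if "s \<le> u" "u < n" for u
  proof -
    have "{v. v < n \<and> Bip s n u v} = {..<s}" using that assms by (auto simp: Bip_def)
    thus ?thesis by (simp add: degree_def)
  qed
  have "fdeg p n (Bip s n) = (\<Sum>u<s. real (degree n (Bip s n) u) powr p) + (\<Sum>u\<in>{s..<n}. real (degree n (Bip s n) u) powr p)"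
    unfolding fdeg_def lessThan_atLeast0 by (rule sum.atLeastLessThan_concat[symmetric]) (use assms in auto)
  also have "\<dots> = (\<Sum>u<s. real (n-s) powr p) + (\<Sum>u\<in>{s..<n}. real s powr p)"
  proof -
    have "(\<Sum>u<s. real (degree n (Bip s n) u) powr p) = (\<Sum>u<s. real (n-s) powr p)"
      by (rule sum.cong) (simp_all add: d1)
    moreover have "(\<Sum>u\<in>{s..<n}. real (degree n (Bip s n) u) powr p) = (\<Sum>u\<in>{s..<n}. real s powr p)"
      by (rule sum.cong) (simp_all add: d2)
    ultimately show ?thesis by simp
  qed
  also have "\<dots> = real s * real (n-s) powr p + real (n-s) * real s powr p" by simp
  finally show ?thesis .
qed

lemma finite_vals: "finite {fdeg p n E | E. simple_graph_on n E \<and> triangle_free E}"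
proof -
  have "{fdeg p n E | E. simple_graph_on n E \<and> triangle_free E} \<subseteq>
        (\<lambda>S. fdeg p n (\<lambda>u v. (u,v) \<in> S)) ` Pow ({..<n} \<times> {..<n})"
  proof
    fix x assume "x \<in> {fdeg p n E | E. simple_graph_on n E \<and> triangle_free E}"
    then obtain E where E: "x = fdeg p n E" "simple_graph_on n E" by auto
    have "E = (\<lambda>u v. (u,v) \<in> {(u,v). E u v})" by auto
    moreover have "{(u,v). E u v} \<in> Pow ({..<n} \<times> {..<n})"
      using E(2) by (auto simp: simple_graph_on_def)
    ultimately show "x \<in> (\<lambda>S. fdeg p n (\<lambda>u v. (u,v) \<in> S)) ` Pow ({..<n} \<times> {..<n})"
      using E(1) by (intro image_eqI[where x="{(u,v). E u v}"]) simp_all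
  qed
  thus ?thesis by (rule finite_subset) auto
qed

lemma phi2_ge: "s \<le> n \<Longrightarrow> fdeg p n (Bip s n) \<le> phi2 p n"
  unfolding phi2_def by (rule Max_ge[OF finite_vals]) (use Bip_ok in blast)

definition g :: "real \<Rightarrow> real \<Rightarrow> real" where
  "g p x = x * (1-x) powr p + (1-x) * x powr p"

lemma hom_aux:
  fixes N x :: real assumes "N > 0" "x \<ge> 0" "1 - x \<ge> 0"
  shows "(N * x) * (N * (1 - x)) powr p + (N * (1 - x)) * (N * x) powr p = N powr (p+1) * g p x"
proof -
  have "(N * x) * (N * (1 - x)) powr p + (N * (1 - x)) * (N * x) powr p
      = (N * x) * (N powr p * (1 - x) powr p) + (N * (1 - x)) * (N powr p * x powr p)"
    using assms by (simp add: powr_mult)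
  also have "\<dots> = (N powr p * N) * g p x" by (simp add: g_def algebra_simps)
  also have "N powr p * N = N powr (p+1)" using assms by (simp add: powr_add)
  finally show ?thesis .
qed

lemma hom:
  assumes "s \<le> n" "n > 0"
  shows "real s * real (n-s) powr p + real (n-s) * real s powr p = real n powr (p+1) * g p (real s / real n)"
proof -
  have n: "real n > 0" using assms by simp
  have a: "real (n-s) = real n * (1 - real s / real n)" using assms n by (simp add: field_simps of_nat_diff)
  have b: "real n * (real s / real n) = real s" using n by simp
  have c: "1 - real s / real n \<ge> 0" using assms n by (simp add: field_simps)
  have "real s / real n \<ge> 0" by simp
  from hom_aux[OF n this c, of p, unfolded a[symmetric] b] show ?thesis .
qed

lemma exists_u:
  fixes q :: real assumes "q > 2"
  shows "\<exists>u. 0 < u \<and> u < 1 \<and> (1-u^2)*((1-u) powr q + (1+u) powr q) > 2"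
proof -
  have L: "((\<lambda>u::real. ((1-u^2)*((1-u) powr q + (1+u) powr q) - 2)/u^2) \<longlongrightarrow> q*(q-1) - 2) (at_right 0)"
    by real_asymp
  have pos: "q*(q-1) - 2 > 0" using mult_strict_mono[of 2 q 1 "q-1"] assms by simp
  have "eventually (\<lambda>u. ((1-u^2)*((1-u) powr q + (1+u) powr q) - 2)/u^2 > 0) (at_right (0::real))"
    using order_tendstoD(1)[OF L pos] .
  moreover have "eventually (\<lambda>u::real. 0 < u \<and> u < 1) (at_right 0)"
    using eventually_at_right_real[of 0 1] by simp
  ultimately have ev: "eventually (\<lambda>u::real. 0 < u \<and> u < 1 \<and> (1-u^2)*((1-u) powr q + (1+u) powr q) > 2) (at_right 0)"
    by eventually_elim (auto simp: zero_less_divide_iff)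
  have nb: "at_right (0::real) \<noteq> bot" by simp
  show ?thesis by (rule eventually_happens'[OF nb ev])
qed

lemma g_alpha:
  fixes u p :: real assumes "0 < u" "u < 1"
  shows "g p ((1-u)/2) = ((1-u^2) * ((1-u) powr (p-1) + (1+u) powr (p-1))) / 2 powr (p+1)"
proof -
  define A where "A = 1 + u"
  define B where "B = 1 - u"
  have A: "A > 0" and B: "B > 0" using assms by (auto simp: A_def B_def)
  have e1: "1 - (1-u)/2 = A/2" by (simp add: A_def field_simps)
  have pA: "A powr p = A * A powr (p-1)" using A powr_add[of A 1 "p-1"] by simp
  have pB: "B powr p = B * B powr (p-1)" using B powr_add[of B 1 "p-1"] by simp
  have p2: "2 powr (p+1) = 2 * 2 powr p" using powr_add[of 2 p 1] by simp
  have "g p ((1-u)/2) = B/2 * (A powr p / 2 powr p) + A/2 * (B powr p / 2 powr p)"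
    unfolding g_def e1 using A B by (simp add: powr_divide B_def)
  also have "\<dots> = (B * A * (A powr (p-1) + B powr (p-1))) / 2 powr (p+1)"
    unfolding pA pB p2 by (simp add: field_simps)
  also have "B * A = 1 - u^2" by (simp add: A_def B_def power2_eq_square algebra_simps)
  finally show ?thesis by (simp add: A_def B_def add.commute)
qed

lemma g_half: "g p (1/2) = 2 / 2 powr (p+1)"
proof -
  have p2: "2 powr (p+1) = 2 * 2 powr p" using powr_add[of 2 p 1] by simp
  have "g p (1/2) = (1/2) powr p" unfolding g_def by simp
  also have "\<dots> = 1 / 2 powr p" by (simp add: powr_divide)
  finally show ?thesis unfolding p2 by simp
qed

lemma isCont_g: "0 < x \<Longrightarrow> x < 1 \<Longrightarrow> isCont (g p) x"
  unfolding g_def[abs_def] by (intro continuous_intros) auto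

theorem mainTheorem7:
  fixes p :: real
  assumes "p > 3"
  shows "\<exists>n0::nat. \<forall>n\<ge>n0. phi2 p n > fdeg p n (T2 n)"
proof -
  have q2: "p - 1 > 2" using assms by simp
  obtain u where u0: "0 < u \<and> u < 1 \<and> (1-u^2)*((1-u) powr (p-1) + (1+u) powr (p-1)) > 2"
    using exists_u[OF q2] ..
  note u = conjunct1[OF u0] conjunct1[OF conjunct2[OF u0]] conjunct2[OF conjunct2[OF u0]]
  define \<alpha> where "\<alpha> = (1-u)/2"
  have a0: "0 < \<alpha>" "\<alpha> < 1" using u by (auto simp: \<alpha>_def)
  have p2: "2 powr (p+1) > 0" by simp
  have galpha: "g p \<alpha> > g p (1/2)"
  proof -
    have "2 / 2 powr (p+1) < (1-u^2)*((1-u) powr (p-1) + (1+u) powr (p-1)) / 2 powr (p+1)"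
      by (rule divide_strict_right_mono[OF u(3) p2])
    thus ?thesis unfolding \<alpha>_def g_alpha[OF u(1,2)] g_half .
  qed
  define s where "s n = nat \<lfloor>\<alpha> * real n\<rfloor>" for n :: nat
  define c where "c n = (n+1) div 2" for n :: nat
  have s_le: "s n \<le> n" for n
  proof -
    have "\<alpha> * real n \<le> real n" using a0 mult_right_le_one_le[of "real n" \<alpha>] by (simp add: mult.commute)
    hence "\<lfloor>\<alpha> * real n\<rfloor> \<le> int n" by linarith
    thus ?thesis unfolding s_def by linarith
  qed
  have c_le: "c n \<le> n" for n unfolding c_def by simp
  have s_real: "real (s n) = of_int \<lfloor>\<alpha> * real n\<rfloor>" for n
    unfolding s_def using a0 by simp
  have lim_s: "((\<lambda>n. real (s n) / real n) \<longlongrightarrow> \<alpha>) at_top"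
  proof (rule tendsto_sandwich[of "\<lambda>n. \<alpha> - 1 / real n" _ _ "\<lambda>n. \<alpha>"])
    show "eventually (\<lambda>n. \<alpha> - 1 / real n \<le> real (s n) / real n) at_top"
      using eventually_gt_at_top[of 0]
    proof eventually_elim
      case (elim n)
      have "\<alpha> * real n - 1 \<le> real (s n)" unfolding s_real by linarith
      hence "(\<alpha> * real n - 1) / real n \<le> real (s n) / real n" by (rule divide_right_mono) simp
      moreover have "(\<alpha> * real n - 1) / real n = \<alpha> - 1 / real n" using elim by (simp add: field_simps)
      ultimately show ?case by simp
    qed
    show "eventually (\<lambda>n. real (s n) / real n \<le> \<alpha>) at_top"
      using eventually_gt_at_top[of 0]
    proof eventually_elim
      case (elim n)
      have "real (s n) \<le> \<alpha> * real n" unfolding s_real by linarith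
      thus ?case using elim by (simp add: field_simps)
    qed
    show "((\<lambda>n. \<alpha> - 1 / real n) \<longlongrightarrow> \<alpha>) at_top" by real_asymp
    show "((\<lambda>n. \<alpha>) \<longlongrightarrow> \<alpha>) at_top" by simp
  qed
  have lim_c: "((\<lambda>n. real (c n) / real n) \<longlongrightarrow> 1/2) at_top"
  proof (rule tendsto_sandwich[of "\<lambda>n. 1/2" _ _ "\<lambda>n. 1/2 + 1 / (2 * real n)"])
    have c1: "real n \<le> 2 * real (c n)" "2 * real (c n) \<le> real n + 1" for n
    proof -
      have "n \<le> 2 * c n" "2 * c n \<le> n + 1" unfolding c_def by auto
      thus "real n \<le> 2 * real (c n)" "2 * real (c n) \<le> real n + 1" by linarith+
    qed
    show "eventually (\<lambda>n. 1/2 \<le> real (c n) / real n) at_top"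
      using eventually_gt_at_top[of 0]
    proof eventually_elim
      case (elim n)
      thus ?case using c1[of n] by (simp add: field_simps)
    qed
    show "eventually (\<lambda>n. real (c n) / real n \<le> 1/2 + 1 / (2 * real n)) at_top"
      using eventually_gt_at_top[of 0]
    proof eventually_elim
      case (elim n)
      thus ?case using c1[of n] by (simp add: field_simps)
    qed
    show "((\<lambda>n. 1/2 + 1 / (2 * real n)) \<longlongrightarrow> 1/2) at_top" by real_asymp
    show "((\<lambda>n. 1/2) \<longlongrightarrow> (1/2::real)) at_top" by simp
  qed
  have gs: "((\<lambda>n. g p (real (s n) / real n)) \<longlongrightarrow> g p \<alpha>) at_top"
    using isCont_tendsto_compose[OF isCont_g[OF a0] lim_s] .
  have gc: "((\<lambda>n. g p (real (c n) / real n)) \<longlongrightarrow> g p (1/2)) at_top"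
    using isCont_tendsto_compose[OF isCont_g lim_c] by simp
  define m where "m = (g p \<alpha> + g p (1/2)) / 2"
  have m1: "m < g p \<alpha>" and m2: "g p (1/2) < m" using galpha by (auto simp: m_def)
  have "eventually (\<lambda>n. phi2 p n > fdeg p n (T2 n)) at_top"
    using order_tendstoD(1)[OF gs m1] order_tendstoD(2)[OF gc m2] eventually_gt_at_top[of 0]
  proof eventually_elim
    case (elim n)
    have "fdeg p n (T2 n) = real n powr (p+1) * g p (real (c n) / real n)"
      unfolding T2_Bip c_def[symmetric] using fdeg_Bip[OF c_le] hom[OF c_le] elim by simp
    also have "\<dots> < real n powr (p+1) * g p (real (s n) / real n)"
      using elim by (intro mult_strict_left_mono) auto
    also have "\<dots> = fdeg p n (Bip (s n) n)"
      using fdeg_Bip[OF s_le] hom[OF s_le] elim by simp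
    also have "\<dots> \<le> phi2 p n" by (rule phi2_ge[OF s_le])
    finally show ?case .
  qed
  thus ?thesis by (simp add: eventually_at_top_linorder)
qed

end
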